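(* Let $r,m,s$ be positive integers with $\gcd(r,2^{3m}-1)=1$, and let $a,b\in\mathbb{F}_{2^{3m}}^*$. Put $A=a^{2^{2m}+2^m+1}+1$ and $B=a^{2^{2m}}b^{2^m}+a^{2^{2m}+2^m}b+b^{2^{2m}}$. Then the polynomial \[ f(x)=x^r\left(x^{2^m(2^m-1)}+ax^{2^m-1}+b\right)^{s(2^{2m}+2^m+1)} \] is a permutation polynomial of $\mathbb{F}_{2^{3m}}$ in each of the following two cases: (i) $A\neq 0$ and $(B/A)^{2^{2m}+2^m+1}\neq 1$; (ii) $A=0$ and $B\neq 0$.
   Context: A polynomial is a permutation polynomial of a finite field if it induces a bijection of that field. *)

theory Defs
  imports "HOL-Computational_Algebra.Polynomial"
begin

definition permutation_poly :: "'a::{field,finite} poly \<Rightarrow> bool" where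
  "permutation_poly p \<longleftrightarrow> bij (poly p)"

end

theory Submission
  imports Defs
begin

lemma ff_card_zero: "of_nat (card (UNIV::'a::{field,finite} set)) = (0::'a)"
proof -
  have "(\<Sum>y\<in>UNIV. y + 1) = (\<Sum>y\<in>UNIV. (y::'a))"
    by (rule sum.reindex_bij_witness[of _ "\<lambda>y. y - 1" "\<lambda>y. y + 1"]) auto
  then show ?thesis by (simp add: sum.distrib)
qed

lemma ff_fermat:
  fixes x :: "'a :: {field,finite}"
  shows   "x ^ card (UNIV :: 'a set) = x"
proof (cases "x = 0")
  case False
  have "x * (\<Prod>y\<in>UNIV-{0}. x * y) = x * x ^ (card (UNIV :: 'a set) - 1) * \<Prod>(UNIV-{0})"
    by (simp add: prod.distrib mult_ac)
  also have "x * x ^ (card (UNIV :: 'a set) - 1) = x ^ Suc (card (UNIV :: 'a set) - 1)"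
    by (subst power_Suc) auto
  also have "Suc (card (UNIV :: 'a set) - 1) = card (UNIV :: 'a set)"
    using finite_UNIV_card_ge_0[where ?'a = 'a] by simp
  also have "(\<Prod>y\<in>UNIV-{0}. x * y) = (\<Prod>y\<in>UNIV-{0}. y)"
    by (rule prod.reindex_bij_witness[of _ "\<lambda>y. y / x" "\<lambda>y. x * y"]) (use False in auto)
  finally show ?thesis
    by simp
qed (use finite_UNIV_card_ge_0[where ?'a = 'a] in auto)

lemma ff_fermat1:
  fixes x :: "'a :: {field,finite}"
  assumes "x \<noteq> 0"
  shows "x ^ (card (UNIV :: 'a set) - 1) = 1"
proof -
  have c: "card (UNIV :: 'a set) = Suc (card (UNIV :: 'a set) - 1)"
    using finite_UNIV_card_ge_0[where ?'a = 'a] by simp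
  have "x * x ^ (card (UNIV :: 'a set) - 1) = x * 1"
    using ff_fermat[of x] by (metis c power_Suc mult_1_right)
  then show ?thesis using assms by simp
qed

lemma frob2:
  fixes x y :: "'a::comm_ring_1"
  assumes "(2::'a) = 0"
  shows "(x + y) ^ (2 ^ k) = x ^ (2 ^ k) + y ^ (2 ^ k)"
proof (induction k)
  case 0 then show ?case by simp
next
  case (Suc k)
  have "(x + y) ^ (2 ^ Suc k) = ((x + y) ^ (2 ^ k))^2"
    by (simp add: power_mult[symmetric] mult.commute)
  also have "\<dots> = (x ^ (2 ^ k) + y ^ (2 ^ k))^2" using Suc by simp
  also have "\<dots> = (x ^ (2 ^ k))^2 + (y ^ (2 ^ k))^2 + 2 * x ^ (2 ^ k) * y ^ (2 ^ k)"
    by (rule power2_sum)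
  also have "\<dots> = x ^ (2 ^ Suc k) + y ^ (2 ^ Suc k)"
    using assms by (simp add: power_mult[symmetric] mult.commute)
  finally show ?case .
qed

lemma root_one:
  fixes w :: "'a :: {field,finite}"
  assumes "gcd r (card (UNIV :: 'a set) - 1) = 1" "r > 0" "w \<noteq> 0" "w ^ r = 1"
  shows "w = 1"
proof -
  obtain u v where uv: "r * u = (card (UNIV :: 'a set) - 1) * v + 1"
    using bezout_nat[of r "card (UNIV :: 'a set) - 1"] assms(1,2) by auto
  have "w ^ (r * u) = 1" using assms(4) by (simp add: power_mult)
  moreover have "w ^ ((card (UNIV :: 'a set) - 1) * v + 1) = w"
    using ff_fermat1[OF assms(3)] by (simp add: power_mult)
  ultimately show ?thesis using uv by simp
qed

theorem proposition9:
  fixes r m s :: nat and a b :: "'a::{field,finite}"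
  assumes card: "card (UNIV :: 'a set) = 2 ^ (3 * m)"
    and pos: "r > 0" "m > 0" "s > 0"
    and cop: "gcd r (2 ^ (3 * m) - 1) = 1"
    and ab: "a \<noteq> 0" "b \<noteq> 0"
  defines "A \<equiv> a ^ (2 ^ (2 * m) + 2 ^ m + 1) + 1"
    and "B \<equiv> a ^ (2 ^ (2 * m)) * b ^ (2 ^ m) + a ^ (2 ^ (2 * m) + 2 ^ m) * b + b ^ (2 ^ (2 * m))"
    and "f \<equiv> monom 1 r *
              (monom 1 (2 ^ m * (2 ^ m - 1)) + monom a (2 ^ m - 1) + [:b:])
                ^ (s * (2 ^ (2 * m) + 2 ^ m + 1))"
  assumes cases: "(A \<noteq> 0 \<and> (B / A) ^ (2 ^ (2 * m) + 2 ^ m + 1) \<noteq> 1) \<or> (A = 0 \<and> B \<noteq> 0)"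
  shows "permutation_poly f"
proof -
  define Q :: nat where "Q = 2 ^ m"
  define N :: nat where "N = Q * Q + Q + 1"
  have Q2: "(2::nat) ^ (2 * m) = Q * Q" unfolding Q_def by (simp add: power_mult_distrib power_mult mult.commute power2_eq_square)
  have Q3: "(2::nat) ^ (3 * m) = Q * Q * Q"
  proof -
    have "3 * m = m + m + m" by simp
    then show ?thesis unfolding Q_def by (simp only: power_add)
  qed
  have Qge: "Q \<ge> 2" unfolding Q_def using pos(2)
    by (cases m) auto
  have qm1: "card (UNIV :: 'a set) - 1 = (Q - 1) * N"
    unfolding card Q3 N_def using Qge
    by (simp add: algebra_simps diff_mult_distrib2 diff_mult_distrib)
  have two: "(2::'a) = 0"
  proof -
    have "(of_nat (2 ^ (3*m)) :: 'a) = 0" using ff_card_zero[where 'a='a] card by simp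
    then have "(2::'a) ^ (3*m) = 0" by simp
    then show ?thesis by simp
  qed
  have neg: "\<And>z::'a. - z = z"
  proof -
    fix z :: 'a
    have "z + z = 2 * z" by simp
    then have "z + z = 0" using two by simp
    then show "- z = z" by (metis add_eq_0_iff)
  qed
  define F where "F = (\<lambda>z::'a. z ^ Q)"
  have Fadd: "\<And>x y. F (x + y) = F x + F y" unfolding F_def Q_def using frob2[OF two] by simp
  have Fmul: "\<And>x y. F (x * y) = F x * F y" unfolding F_def by (simp add: power_mult_distrib)
  have F3: "\<And>z. F (F (F z)) = z"
  proof -
    fix z :: 'a
    have "F (F (F z)) = z ^ (Q * Q * Q)" unfolding F_def by (simp add: power_mult)
    also have "\<dots> = z" using ff_fermat[of z] card Q3 by simp
    finally show "F (F (F z)) = z" .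
  qed
  have Fpow: "\<And>z k. F (z ^ k) = F z ^ k" unfolding F_def by (simp add: power_mult[symmetric] mult.commute)
  have noroot: "y ^ Q + a * y + b \<noteq> 0" if yN: "y ^ N = 1" for y
  proof
    assume "y ^ Q + a * y + b = 0"
    then have e1: "F y = a * y + b" unfolding F_def by (metis add.assoc add_eq_0_iff neg)
    have e2: "F (F y) = F a * (a * y + b) + F b"
      using e1 by (simp add: Fadd Fmul)
    have "y = F (F (F y))" using F3 by simp
    also have "\<dots> = F (F a * (a * y + b) + F b)" using e2 by simp
    also have "\<dots> = F (F a) * (F a * F y + F b) + F (F b)" by (simp add: Fadd Fmul)
    also have "\<dots> = F (F a) * (F a * (a * y + b) + F b) + F (F b)" using e1 by simp
    finally have e3: "y = F (F a) * (F a * (a * y + b) + F b) + F (F b)" .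
    have FFa: "F (F a) = a ^ (Q * Q)" "F (F b) = b ^ (Q*Q)" unfolding F_def by (simp_all add: power_mult)
    have "A = a ^ (Q * Q + Q + 1) + 1" unfolding A_def Q2 Q_def by simp
    moreover have "B = a ^ (Q * Q) * b ^ Q + a ^ (Q * Q + Q) * b + b ^ (Q * Q)"
      unfolding B_def Q2 Q_def by simp
    ultimately have AB: "A * y = B + (a^(Q*Q+Q+1)*y + a^(Q*Q+Q+1)*y)"
      using e3 unfolding FFa unfolding F_def
      by (simp add: algebra_simps power_add)
    have "a^(Q*Q+Q+1)*y + a^(Q*Q+Q+1)*y = 0" using neg by (metis add_eq_0_iff)
    with AB have AB': "A * y = B" by simp
    have "y \<noteq> 0" using yN unfolding N_def by auto
    from cases show False
    proof
      assume "A \<noteq> 0 \<and> (B / A) ^ (2 ^ (2 * m) + 2 ^ m + 1) \<noteq> 1"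
      moreover have "B / A = y" using AB' calculation by (simp add: field_simps)
      ultimately show False using yN unfolding N_def Q2 Q_def by simp
    next
      assume "A = 0 \<and> B \<noteq> 0"
      with AB' show False by simp
    qed
  qed
  define g where "g = (\<lambda>y::'a. y ^ Q + a * y + b)"
  have pf: "poly f x = x ^ r * g (x ^ (Q - 1)) ^ (s * N)" for x
    unfolding f_def g_def N_def Q2 Q_def[symmetric]
    by (simp add: poly_monom power_mult[symmetric] mult.commute)
  have ynorm: "(x ^ (Q - 1)) ^ N = 1" if "x \<noteq> 0" for x :: 'a
    using ff_fermat1[OF that] qm1 by (simp add: power_mult)
  have gnz: "g (x ^ (Q - 1)) \<noteq> 0" if "x \<noteq> 0" for x
    using noroot[OF ynorm[OF that]] unfolding g_def by simp
  have fnz: "poly f x \<noteq> 0" if "x \<noteq> 0" for x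
    using gnz[OF that] that unfolding pf by simp
  have f0: "poly f 0 = 0" unfolding pf using pos(1) by simp
  have fpow: "poly f x ^ (Q - 1) = (x ^ (Q - 1)) ^ r" if "x \<noteq> 0" for x
  proof -
    have "(g (x ^ (Q - 1)) ^ (s * N)) ^ (Q - 1) = (g (x ^ (Q - 1)) ^ (card (UNIV :: 'a set) - 1)) ^ s"
      unfolding qm1 by (simp add: power_mult[symmetric] mult_ac)
    also have "\<dots> = 1" using ff_fermat1[OF gnz[OF that]] by simp
    finally show ?thesis unfolding pf by (simp add: power_mult_distrib power_mult[symmetric] mult.commute)
  qed
  have cop': "gcd r (card (UNIV :: 'a set) - 1) = 1" using cop card by simp
  have "inj (poly f)"
  proof (rule injI)
    fix x1 x2 assume eq: "poly f x1 = poly f x2"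
    show "x1 = x2"
    proof (cases "x1 = 0 \<or> x2 = 0")
      case True
      then show ?thesis using eq f0 fnz by metis
    next
      case False
      then have nz: "x1 \<noteq> 0" "x2 \<noteq> 0" by auto
      have "(x1 ^ (Q - 1)) ^ r = (x2 ^ (Q - 1)) ^ r" using fpow[OF nz(1)] fpow[OF nz(2)] eq by simp
      then have "((x1 / x2) ^ (Q - 1)) ^ r = 1" using nz by (simp add: power_divide)
      then have "(x1 / x2) ^ (Q - 1) = 1" using root_one[OF cop' pos(1)] nz by simp
      then have yeq: "x1 ^ (Q - 1) = x2 ^ (Q - 1)" using nz by (simp add: power_divide)
      then have "x1 ^ r = x2 ^ r" using eq gnz[OF nz(1)] unfolding pf by simp
      then have "(x1 / x2) ^ r = 1" using nz by (simp add: power_divide)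
      then have "x1 / x2 = 1" using root_one[OF cop' pos(1), of "x1/x2"] nz by simp
      then show ?thesis using nz by simp
    qed
  qed
  then show ?thesis unfolding permutation_poly_def
    using finite_UNIV_inj_surj[of "poly f"] by (simp add: bij_def)
qed

end
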